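(* Let $K\ge1$, $\delta\in(0,1)$, parameters $\theta_i\in\Theta_i$ for $i\in[K]$, and data $\mathbf X=(X_1,\dots,X_K)$ with arbitrary dependence. For each $i$ let $(E_i(\theta))_{\theta\in\Theta_i}$ be a family of e-values ($E_i(\theta)\ge0$, $\mathbb{E}[E_i(\theta)]\le1$ whenever $\theta$ is the true value of $\theta_i$) with associated e-CIs $C_i(\alpha)=\{\theta\in\Theta_i:E_i(\theta)<1/\alpha\}$. Let $w_1,\dots,w_K\ge0$ be fixed weights with $\sum_{i=1}^K w_i\le K$, let $S=\mathcal S(\mathbf X)$ for an arbitrary selection rule $\mathcal S$, and for each $i\in S$ report $C_i(w_i\delta|S|/K)$. Then $$\mathrm{FCR}=\mathbb{E}\left[\frac{\sum_{i\in S}\mathbf 1\{\theta_i\notin C_i(w_i\delta|S|/K)\}}{|S|\vee1}\right]\le\delta.$$ *)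

theory Defs
  imports "HOL-Probability.Probability"
begin

text \<open>e-confidence interval C(alpha) = {theta in Theta. E(theta) < 1/alpha}, evaluated at outcome omega.
  For alpha <= 0 we use the convention 1/0 = infinity, i.e. the whole parameter set.\<close>
definition eCI :: "'p set \<Rightarrow> ('p \<Rightarrow> 'a \<Rightarrow> real) \<Rightarrow> real \<Rightarrow> 'a \<Rightarrow> 'p set" where
  "eCI \<Theta> E \<alpha> \<omega> = (if \<alpha> > 0 then {\<theta>\<in>\<Theta>. E \<theta> \<omega> < 1 / \<alpha>} else \<Theta>)"

end

theory Submission
  imports Defs
begin

theorem theorem5:
  fixes M :: "'a measure" and K :: nat and \<delta> :: real
    and \<Theta> :: "nat \<Rightarrow> 'p set" and \<theta> :: "nat \<Rightarrow> 'p"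
    and E :: "nat \<Rightarrow> 'p \<Rightarrow> 'a \<Rightarrow> real"
    and w :: "nat \<Rightarrow> real" and S :: "'a \<Rightarrow> nat set"
  assumes "prob_space M"
    and "K \<ge> 1" and "0 < \<delta>" and "\<delta> < 1"
    and "\<And>i. i \<in> {1..K} \<Longrightarrow> \<theta> i \<in> \<Theta> i"
    and "\<And>i t. i \<in> {1..K} \<Longrightarrow> t \<in> \<Theta> i \<Longrightarrow> E i t \<in> borel_measurable M"
    and "\<And>i t \<omega>. i \<in> {1..K} \<Longrightarrow> t \<in> \<Theta> i \<Longrightarrow> \<omega> \<in> space M \<Longrightarrow> E i t \<omega> \<ge> 0"
    and "\<And>i. i \<in> {1..K} \<Longrightarrow> integrable M (E i (\<theta> i))"
    and "\<And>i. i \<in> {1..K} \<Longrightarrow> (\<integral>\<omega>. E i (\<theta> i) \<omega> \<partial>M) \<le> 1"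
    and "\<And>i. i \<in> {1..K} \<Longrightarrow> w i \<ge> 0"
    and "(\<Sum>i=1..K. w i) \<le> real K"
    and "\<And>\<omega>. \<omega> \<in> space M \<Longrightarrow> S \<omega> \<subseteq> {1..K}"
    and "\<And>A. {\<omega> \<in> space M. S \<omega> = A} \<in> sets M"
  shows "(\<integral>\<omega>. (\<Sum>i\<in>S \<omega>. (if \<theta> i \<notin> eCI (\<Theta> i) (E i) (w i * \<delta> * real (card (S \<omega>)) / real K) \<omega> then 1 else 0))
            / real (max (card (S \<omega>)) 1) \<partial>M) \<le> \<delta>"
proof -
  interpret P: prob_space M by fact
  define f where "f = (\<lambda>\<omega>. (\<Sum>i\<in>S \<omega>. (if \<theta> i \<notin> eCI (\<Theta> i) (E i) (w i * \<delta> * real (card (S \<omega>)) / real K) \<omega> then 1 else 0))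
            / real (max (card (S \<omega>)) 1) :: real)"
  define g where "g = (\<lambda>\<omega>. \<delta> / real K * (\<Sum>i=1..K. w i * E i (\<theta> i) \<omega>))"
  have Kpos: "real K > 0" using assms(2) by simp
  have gint: "integrable M g" unfolding g_def using assms(8) by (intro integrable_mult_right integrable_sum integrable_mult_right) auto
  have ig: "integral\<^sup>L M g \<le> \<delta>"
  proof -
    have "integral\<^sup>L M g = \<delta> / real K * (\<Sum>i=1..K. w i * integral\<^sup>L M (E i (\<theta> i)))"
      unfolding g_def using assms(8) by (simp add: integral_sum)
    also have "\<dots> \<le> \<delta> / real K * (\<Sum>i=1..K. w i)"
    proof (rule mult_left_mono)
      show "(\<Sum>i=1..K. w i * integral\<^sup>L M (E i (\<theta> i))) \<le> (\<Sum>i=1..K. w i)"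
      proof (rule sum_mono)
        fix i assume "i \<in> {1..K}"
        then show "w i * integral\<^sup>L M (E i (\<theta> i)) \<le> w i"
          using assms(9,10) mult_left_mono[of _ 1 "w i"] by fastforce
      qed
      show "0 \<le> \<delta> / real K" using assms(3) by simp
    qed
    also have "\<dots> \<le> \<delta> / real K * real K"
      using assms(11) assms(3) Kpos by (intro mult_left_mono) auto
    also have "\<dots> = \<delta>" using Kpos by simp
    finally show ?thesis .
  qed
  have pw: "f \<omega> \<le> g \<omega>" if om: "\<omega> \<in> space M" for \<omega>
  proof -
    let ?s = "real (card (S \<omega>))"
    have SK: "S \<omega> \<subseteq> {1..K}" using assms(12) om by blast
    have fin: "finite (S \<omega>)" using SK finite_subset by blast
    have Enn: "\<And>i. i \<in> {1..K} \<Longrightarrow> E i (\<theta> i) \<omega> \<ge> 0" using assms(5,7) om by blast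
    have ind: "(if \<theta> i \<notin> eCI (\<Theta> i) (E i) (w i * \<delta> * ?s / real K) \<omega> then 1 else 0)
        \<le> \<delta> * ?s / real K * (w i * E i (\<theta> i) \<omega>)" if i: "i \<in> S \<omega>" for i
    proof -
      have iK: "i \<in> {1..K}" using i SK by blast
      have a0: "w i * \<delta> * ?s / real K \<ge> 0" using assms(3) assms(10)[OF iK] Kpos by simp
      have e0: "E i (\<theta> i) \<omega> \<ge> 0" using Enn iK .
      have rhs0: "\<delta> * ?s / real K * (w i * E i (\<theta> i) \<omega>) \<ge> 0"
        using e0 assms(3) assms(10)[OF iK] Kpos by (intro mult_nonneg_nonneg divide_nonneg_pos) auto
      show ?thesis
      proof (cases "w i * \<delta> * ?s / real K > 0")
        case False
        then show ?thesis using assms(5)[OF iK] rhs0 by (simp add: eCI_def)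
      next
        case True
        show ?thesis
        proof (cases "\<theta> i \<notin> eCI (\<Theta> i) (E i) (w i * \<delta> * ?s / real K) \<omega>")
          case False then show ?thesis using rhs0 by simp
        next
          case c: True
          then have "E i (\<theta> i) \<omega> \<ge> 1 / (w i * \<delta> * ?s / real K)"
            using True assms(5)[OF iK] by (simp add: eCI_def)
          then have "(w i * \<delta> * ?s / real K) * E i (\<theta> i) \<omega> \<ge> (w i * \<delta> * ?s / real K) * (1 / (w i * \<delta> * ?s / real K))"
            using True by (intro mult_left_mono) auto
          also have "(w i * \<delta> * ?s / real K) * (1 / (w i * \<delta> * ?s / real K)) = 1"
            using True by (metis less_irrefl mult.commute divide_self_if times_divide_eq_left mult_1)
          finally have "(w i * \<delta> * ?s / real K) * E i (\<theta> i) \<omega> \<ge> 1" .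
          then show ?thesis using c by (simp add: algebra_simps)
        qed
      qed
    qed
    have gn: "g \<omega> \<ge> 0" unfolding g_def using Enn assms(3,10) Kpos
      by (intro mult_nonneg_nonneg sum_nonneg) auto
    show ?thesis
    proof (cases "card (S \<omega>) = 0")
      case True then show ?thesis using gn fin unfolding f_def by simp
    next
      case False
      then have sp: "?s > 0" by simp
      have "(\<Sum>i\<in>S \<omega>. (if \<theta> i \<notin> eCI (\<Theta> i) (E i) (w i * \<delta> * ?s / real K) \<omega> then 1 else 0))
          \<le> (\<Sum>i\<in>S \<omega>. \<delta> * ?s / real K * (w i * E i (\<theta> i) \<omega>))"
        by (rule sum_mono) (rule ind)
      also have "\<dots> = \<delta> * ?s / real K * (\<Sum>i\<in>S \<omega>. w i * E i (\<theta> i) \<omega>)"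
        by (simp add: sum_distrib_left)
      also have "\<dots> \<le> \<delta> * ?s / real K * (\<Sum>i=1..K. w i * E i (\<theta> i) \<omega>)"
        using SK Enn assms(10) assms(3) Kpos sp
        by (intro mult_left_mono sum_mono2) (auto intro: mult_nonneg_nonneg)
      finally have h: "(\<Sum>i\<in>S \<omega>. (if \<theta> i \<notin> eCI (\<Theta> i) (E i) (w i * \<delta> * ?s / real K) \<omega> then 1 else 0))
          \<le> ?s * g \<omega>" unfolding g_def by (simp add: algebra_simps)
      have "real (max (card (S \<omega>)) 1) = ?s" using False by simp
      then show ?thesis unfolding f_def using h sp by (simp add: divide_le_eq mult.commute)
    qed
  qed
  show ?thesis
  proof (cases "integrable M f")
    case True
    have "integral\<^sup>L M f \<le> integral\<^sup>L M g" by (rule integral_mono[OF True gint pw])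
    then show ?thesis using ig unfolding f_def by simp
  next
    case False
    then have "integral\<^sup>L M f = 0" by (rule not_integrable_integral_eq)
    then show ?thesis using assms(3) unfolding f_def by simp
  qed
qed

end
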